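(* Let $G=(V,E)$ be a transient graph that is connected, simple, and locally finite, with a fixed vertex $o$ and a fixed rotor mechanism $(m_x)_{x\in V}$. If $\rho_{\min}$ is a rotor configuration such that, for every vertex $x\in V$ and every outgoing edge $(x,y)$ of $x$, \[ w(\rho_{\min}(x))\leq w(x,y), \] then \[ \lim_{n\to\infty}\frac{I(\rho_{\min},n)}{n}=\alpha_G. \]
   Context: $G=(V,E)$ is connected, simple (no loops or multiple edges), locally finite, and $o\in V$ is a fixed vertex. For $x\in V$, $\mathcal{E}_x$ is the set of outgoing directed edges $(x,y)$ with $y$ a neighbor of $x$ (written $y\sim x$), and $\deg(x)=|\mathcal{E}_x|$. A rotor mechanism is a choice, for each $x$, of a bijection $m_x:\mathcal{E}_x\to\mathcal{E}_x$ having exactly one orbit. A rotor configuration is a map $\rho$ assigning to each $x\in V$ an edge $\rho(x)\in\mathcal{E}_x$. $\mathcal{G}(x)$ (the Green function) is the expected number of visits to $x$ by simple random walk on $G$ started at $o$ (finite since $G$ is transient). $\alpha_G$ is the probability that simple random walk started at $o$ never returns to $o$. Weight of a directed edge $(x,y)$: writing $(x,y_i):=m_x^i(x,y)$ (the edge obtained from $(x,y)$ by applying $m_x$ $i$ times), \[ w(x,y):=\frac{-1}{\deg(x)}\sum_{i=0}^{\deg(x)-1} i\,\frac{\mathcal{G}(y_{i+1})}{\deg(y_{i+1})}. \] Experiment: given an initial rotor configuration $\rho$ and $n\geq1$, define particle positions $X_t^{(0)},\dots,X_t^{(n-1)}$ and configurations $\rho_t$ for $t\ge 0$ by: $X_0^{(i)}=o$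 for all $i$ and $\rho_0=\rho$. Let $i_t:=t+1 \bmod n$. Particle $i$ is said to have returned to $o$ by time $t$ if $X_t^{(i)}=o$ and $X_s^{(i)}\neq o$ for some $s<t$. If particle $i_t$ has returned to $o$ by time $t$, then $\rho_{t+1}=\rho_t$ and $X_{t+1}^{(i)}=X_t^{(i)}$ for all $i$. Otherwise, $\rho_{t+1}(x)=m_x(\rho_t(x))$ if $x=X_t^{(i_t)}$ and $\rho_{t+1}(x)=\rho_t(x)$ otherwise; $X_{t+1}^{(i_t)}$ is the target vertex of the edge $\rho_{t+1}(X_t^{(i_t)})$, and $X_{t+1}^{(i)}=X_t^{(i)}$ for $i\neq i_t$. $I(\rho,n)$ denotes the number of particles $i\in\{0,\dots,n-1\}$ that never return to $o$. *)

theory Defs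
  imports Complex_Main
begin

(* Graph G = (V,E): vertices are the elements of the type 'v, edges given by a
   relation adj.  A directed edge (x,y) out of x is represented by its target y. *)

definition nbrs :: "('v \<Rightarrow> 'v \<Rightarrow> bool) \<Rightarrow> 'v \<Rightarrow> 'v set" where
  "nbrs adj x = {y. adj x y}"

definition deg :: "('v \<Rightarrow> 'v \<Rightarrow> bool) \<Rightarrow> 'v \<Rightarrow> nat" where
  "deg adj x = card (nbrs adj x)"

definition simple_graph :: "('v \<Rightarrow> 'v \<Rightarrow> bool) \<Rightarrow> bool" where
  "simple_graph adj \<longleftrightarrow> (\<forall>x. \<not> adj x x) \<and> (\<forall>x y. adj x y \<longrightarrow> adj y x)"

definition connected_graph :: "('v \<Rightarrow> 'v \<Rightarrow> bool) \<Rightarrow> bool" where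
  "connected_graph adj \<longleftrightarrow> (\<forall>x y. adj\<^sup>*\<^sup>* x y)"

definition locally_finite :: "('v \<Rightarrow> 'v \<Rightarrow> bool) \<Rightarrow> bool" where
  "locally_finite adj \<longleftrightarrow> (\<forall>x. finite (nbrs adj x))"

fun srw_prob :: "('v \<Rightarrow> 'v \<Rightarrow> bool) \<Rightarrow> nat \<Rightarrow> 'v \<Rightarrow> 'v \<Rightarrow> real" where
  "srw_prob adj 0 x y = (if x = y then 1 else 0)"
| "srw_prob adj (Suc n) x y =
     (\<Sum>z\<in>nbrs adj x. (1 / real (deg adj x)) * srw_prob adj n z y)"

definition green :: "('v \<Rightarrow> 'v \<Rightarrow> bool) \<Rightarrow> 'v \<Rightarrow> 'v \<Rightarrow> real" where
  "green adj v0 x = (\<Sum>n. srw_prob adj n v0 x)"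

definition transient :: "('v \<Rightarrow> 'v \<Rightarrow> bool) \<Rightarrow> 'v \<Rightarrow> bool" where
  "transient adj v0 \<longleftrightarrow> summable (\<lambda>n. srw_prob adj n v0 v0)"

(* avoid_prob adj v0 n x = probability that SRW started at x does not visit v0
   at any of the times 1,...,n *)
fun avoid_prob :: "('v \<Rightarrow> 'v \<Rightarrow> bool) \<Rightarrow> 'v \<Rightarrow> nat \<Rightarrow> 'v \<Rightarrow> real" where
  "avoid_prob adj v0 0 x = 1"
| "avoid_prob adj v0 (Suc n) x =
     (\<Sum>z\<in>nbrs adj x. (1 / real (deg adj x)) * (if z = v0 then 0 else avoid_prob adj v0 n z))"

(* alpha_G: probability that SRW started at v0 never returns to v0
   (limit of the decreasing sequence of probabilities of the events
   "no return up to time n") *)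
definition escape_prob :: "('v \<Rightarrow> 'v \<Rightarrow> bool) \<Rightarrow> 'v \<Rightarrow> real" where
  "escape_prob adj v0 = (INF n. avoid_prob adj v0 n v0)"

definition rotor_mechanism :: "('v \<Rightarrow> 'v \<Rightarrow> bool) \<Rightarrow> ('v \<Rightarrow> 'v \<Rightarrow> 'v) \<Rightarrow> bool" where
  "rotor_mechanism adj m \<longleftrightarrow>
     (\<forall>x. bij_betw (m x) (nbrs adj x) (nbrs adj x) \<and>
          (\<forall>y\<in>nbrs adj x. \<forall>z\<in>nbrs adj x. \<exists>i. (m x ^^ i) y = z))"

definition rotor_config :: "('v \<Rightarrow> 'v \<Rightarrow> bool) \<Rightarrow> ('v \<Rightarrow> 'v) \<Rightarrow> bool" where
  "rotor_config adj \<rho> \<longleftrightarrow> (\<forall>x. adj x (\<rho> x))"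

definition weight :: "('v \<Rightarrow> 'v \<Rightarrow> bool) \<Rightarrow> ('v \<Rightarrow> 'v \<Rightarrow> 'v) \<Rightarrow> 'v \<Rightarrow> 'v \<Rightarrow> 'v \<Rightarrow> real" where
  "weight adj m v0 x y =
     (- 1 / real (deg adj x)) *
     (\<Sum>i<deg adj x. real i * (green adj v0 ((m x ^^ Suc i) y) / real (deg adj ((m x ^^ Suc i) y))))"

(* State of the experiment at time t: (rotor configuration rho_t, positions X_t,
   flags L_t) where L_t i holds iff X_s^(i) \<noteq> v0 for some s \<le> t.
   Particle i has returned to v0 by time t iff X_t^(i) = v0 \<and> L_t i. *)
type_synonym 'v exp_state = "('v \<Rightarrow> 'v) \<times> (nat \<Rightarrow> 'v) \<times> (nat \<Rightarrow> bool)"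

definition exp_step :: "('v \<Rightarrow> 'v \<Rightarrow> 'v) \<Rightarrow> 'v \<Rightarrow> nat \<Rightarrow> nat \<Rightarrow> 'v exp_state \<Rightarrow> 'v exp_state" where
  "exp_step m v0 n t s =
     (case s of (\<rho>, X, L) \<Rightarrow>
        (let i = (t + 1) mod n in
         if X i = v0 \<and> L i then (\<rho>, X, L)
         else (let x = X i; \<rho>' = \<rho>(x := m x (\<rho> x)); y = \<rho>' x in
               (\<rho>', X(i := y), L(i := (L i \<or> y \<noteq> v0))))))"

fun exp_state :: "('v \<Rightarrow> 'v \<Rightarrow> 'v) \<Rightarrow> 'v \<Rightarrow> ('v \<Rightarrow> 'v) \<Rightarrow> nat \<Rightarrow> nat \<Rightarrow> 'v exp_state" where
  "exp_state m v0 \<rho> n 0 = (\<rho>, (\<lambda>_. v0), (\<lambda>_. False))"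
| "exp_state m v0 \<rho> n (Suc t) = exp_step m v0 n t (exp_state m v0 \<rho> n t)"

definition pos :: "('v \<Rightarrow> 'v \<Rightarrow> 'v) \<Rightarrow> 'v \<Rightarrow> ('v \<Rightarrow> 'v) \<Rightarrow> nat \<Rightarrow> nat \<Rightarrow> nat \<Rightarrow> 'v" where
  "pos m v0 \<rho> n t i = fst (snd (exp_state m v0 \<rho> n t)) i"

definition returned :: "('v \<Rightarrow> 'v \<Rightarrow> 'v) \<Rightarrow> 'v \<Rightarrow> ('v \<Rightarrow> 'v) \<Rightarrow> nat \<Rightarrow> nat \<Rightarrow> nat \<Rightarrow> bool" where
  "returned m v0 \<rho> n t i \<longleftrightarrow> pos m v0 \<rho> n t i = v0 \<and> (\<exists>s<t. pos m v0 \<rho> n s i \<noteq> v0)"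

definition escapes :: "('v \<Rightarrow> 'v \<Rightarrow> 'v) \<Rightarrow> 'v \<Rightarrow> ('v \<Rightarrow> 'v) \<Rightarrow> nat \<Rightarrow> nat" where
  "escapes m v0 \<rho> n = card {i. i < n \<and> (\<forall>t. \<not> returned m v0 \<rho> n t i)}"

end

theory Submission
  imports Defs
begin

lemma funpow_in:
  assumes "f ` S \<subseteq> S" "y \<in> S" shows "(f ^^ k) y \<in> S"
  using assms by (induction k) auto

lemma inj_on_funpow_S:
  assumes "inj_on f S" "f ` S \<subseteq> S" shows "inj_on (f ^^ k) S"
proof (induction k)
  case 0 then show ?case by simp
next
  case (Suc k)
  have "inj_on (f \<circ> (f ^^ k)) S"
    using Suc assms by (intro comp_inj_on) (auto intro: inj_on_subset[OF assms(1)] funpow_in)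
  then show ?case by (simp add: comp_def)
qed

lemma orbit_period:
  assumes bij: "bij_betw f S S" and fin: "finite S"
    and orb: "\<forall>y\<in>S. \<forall>z\<in>S. \<exists>i. (f ^^ i) y = z" and y: "y \<in> S"
  shows "(f ^^ card S) y = y"
    and "bij_betw (\<lambda>i. (f ^^ Suc i) y) {..<card S} S"
proof -
  have fS: "f ` S \<subseteq> S" using bij by (simp add: bij_betw_def)
  have injf: "inj_on f S" using bij by (simp add: bij_betw_def)
  have inS: "\<And>k. (f ^^ k) y \<in> S" using funpow_in[OF fS y] .
  define d where "d = card S"
  have "\<not> inj_on (\<lambda>i. (f ^^ i) y) {..d}"
  proof
    assume "inj_on (\<lambda>i. (f ^^ i) y) {..d}"
    then have "card ((\<lambda>i. (f ^^ i) y) ` {..d}) = Suc d" by (simp add: card_image)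
    moreover have "card ((\<lambda>i. (f ^^ i) y) ` {..d}) \<le> d"
      unfolding d_def using fin inS by (intro card_mono) auto
    ultimately show False by simp
  qed
  then obtain i j where ij: "i \<le> d" "j \<le> d" "i \<noteq> j" "(f ^^ i) y = (f ^^ j) y"
    unfolding inj_on_def by auto
  have "\<exists>i j. i < j \<and> j \<le> d \<and> (f ^^ i) y = (f ^^ j) y"
    using ij by (metis linorder_neqE_nat)
  then obtain i j where ij: "i < j" "j \<le> d" "(f ^^ i) y = (f ^^ j) y" by blast
  define p where "p = j - i"
  have "(f ^^ i) ((f ^^ p) y) = (f ^^ i) y"
  proof -
    have "(f ^^ i) ((f ^^ p) y) = (f ^^ (i + p)) y" by (simp add: funpow_add)
    also have "i + p = j" using ij by (simp add: p_def)
    finally show ?thesis using ij by simp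
  qed
  then have pp: "(f ^^ p) y = y"
    using inj_on_funpow_S[OF injf fS, of i] inS y unfolding inj_on_def by blast
  have p0: "0 < p" "p \<le> d" using ij by (auto simp: p_def)
  have modp: "(f ^^ k) y = (f ^^ (k mod p)) y" for k
  proof -
    have "(f ^^ (p * q)) y = y" for q
      by (induction q) (simp_all add: funpow_add pp)
    then have "(f ^^ (k mod p + p * (k div p))) y = (f ^^ (k mod p)) y"
      by (simp only: funpow_add comp_apply)
    moreover have "k mod p + p * (k div p) = k" by simp
    ultimately show ?thesis by metis
  qed
  have "S \<subseteq> (\<lambda>i. (f ^^ i) y) ` {..<p}"
  proof
    fix z assume "z \<in> S"
    then obtain k where "(f ^^ k) y = z" using orb y by blast
    then show "z \<in> (\<lambda>i. (f ^^ i) y) ` {..<p}"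
      using modp[of k] p0 by (intro image_eqI[of _ _ "k mod p"]) auto
  qed
  then have "d \<le> p" unfolding d_def
    by (metis card_image_le card_lessThan card_mono finite_imageI finite_lessThan order_trans)
  then have pd: "p = d" using p0 by simp
  then show "(f ^^ card S) y = y" using pp d_def by simp
  have im: "(\<lambda>i. (f ^^ Suc i) y) ` {..<d} = S"
  proof
    show "(\<lambda>i. (f ^^ Suc i) y) ` {..<d} \<subseteq> S" using inS by blast
    show "S \<subseteq> (\<lambda>i. (f ^^ Suc i) y) ` {..<d}"
    proof
      fix z assume "z \<in> S"
      then obtain k where k: "(f ^^ k) y = z" using orb y by blast
      show "z \<in> (\<lambda>i. (f ^^ Suc i) y) ` {..<d}"
      proof (cases "k mod d = 0")
        case True
        then have "z = (f ^^ Suc (d - 1)) y" using k modp[of k] pd pp p0 by simp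
        then show ?thesis using p0 pd by (intro image_eqI[of _ _ "d - 1"]) auto
      next
        case False
        then have "z = (f ^^ Suc (k mod d - 1)) y" using k modp[of k] pd by simp
        moreover have "k mod d - 1 < d" using p0 pd
          by (meson le_less_trans diff_le_self mod_less_divisor)
        ultimately show ?thesis by blast
      qed
    qed
  qed
  have "inj_on (\<lambda>i. (f ^^ Suc i) y) {..<d}"
  proof (rule eq_card_imp_inj_on)
    show "card ((\<lambda>i. (f ^^ Suc i) y) ` {..<d}) = card {..<d}"
      by (subst im) (simp add: d_def)
  qed simp
  then show "bij_betw (\<lambda>i. (f ^^ Suc i) y) {..<card S} S"
    using im by (simp add: bij_betw_def d_def)
qed


definition wt :: "('v \<Rightarrow> 'v \<Rightarrow> bool) \<Rightarrow> ('v \<Rightarrow> 'v \<Rightarrow> 'v) \<Rightarrow> ('v \<Rightarrow> real) \<Rightarrow> 'v \<Rightarrow> 'v \<Rightarrow> real" where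
  "wt adj m f x y = (- 1 / real (deg adj x)) * (\<Sum>i<deg adj x. real i * f ((m x ^^ Suc i) y))"

lemma weight_wt: "weight adj m v0 x y = wt adj m (\<lambda>z. green adj v0 z / real (deg adj z)) x y"
  by (simp add: weight_def wt_def)

lemma shift_alg:
  fixes a :: "nat \<Rightarrow> real"
  assumes "a (Suc d) = a 1"
  shows "(\<Sum>i<d. real i * a (Suc (Suc i))) - (\<Sum>i<d. real i * a (Suc i))
         = real d * a 1 - (\<Sum>i<d. a (Suc i))"
proof -
  have e1: "(\<Sum>j<Suc d. real j * a (Suc j)) = (\<Sum>i<d. real (Suc i) * a (Suc (Suc i)))"
    by (subst sum.lessThan_Suc_shift) simp
  have e2: "(\<Sum>j<Suc d. real j * a (Suc j)) = (\<Sum>i<d. real i * a (Suc i)) + real d * a (Suc d)"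
    by simp
  have e3: "(\<Sum>j<Suc d. a (Suc j)) = a 1 + (\<Sum>i<d. a (Suc (Suc i)))"
    by (subst sum.lessThan_Suc_shift) simp
  have e4: "(\<Sum>j<Suc d. a (Suc j)) = (\<Sum>i<d. a (Suc i)) + a (Suc d)"
    by simp
  have e5: "(\<Sum>i<d. real (Suc i) * a (Suc (Suc i))) = (\<Sum>i<d. real i * a (Suc (Suc i))) + (\<Sum>i<d. a (Suc (Suc i)))"
    by (simp add: algebra_simps sum.distrib)
  show ?thesis using e1 e2 e3 e4 e5 assms by simp
qed

context
  fixes adj :: "'v \<Rightarrow> 'v \<Rightarrow> bool" and m :: "'v \<Rightarrow> 'v \<Rightarrow> 'v"
  assumes rm: "rotor_mechanism adj m" and lf: "locally_finite adj"
begin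

lemma orbit_facts:
  assumes y: "y \<in> nbrs adj x"
  shows "(m x ^^ deg adj x) y = y"
    and "bij_betw (\<lambda>i. (m x ^^ Suc i) y) {..<deg adj x} (nbrs adj x)"
    and "deg adj x > 0"
proof -
  have b: "bij_betw (m x) (nbrs adj x) (nbrs adj x)" and o: "\<forall>y\<in>nbrs adj x. \<forall>z\<in>nbrs adj x. \<exists>i. (m x ^^ i) y = z"
    using rm by (auto simp: rotor_mechanism_def)
  have f: "finite (nbrs adj x)" using lf by (simp add: locally_finite_def)
  show "(m x ^^ deg adj x) y = y" "bij_betw (\<lambda>i. (m x ^^ Suc i) y) {..<deg adj x} (nbrs adj x)"
    using orbit_period[OF b f o y] by (simp_all add: deg_def)
  show "deg adj x > 0" using y f by (auto simp: deg_def card_gt_0_iff)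
qed

lemma m_in: "y \<in> nbrs adj x \<Longrightarrow> m x y \<in> nbrs adj x"
  using rm by (auto simp: rotor_mechanism_def bij_betw_def)

lemma orbit_sum:
  assumes y: "y \<in> nbrs adj x"
  shows "(\<Sum>i<deg adj x. g ((m x ^^ Suc i) y)) = (\<Sum>z\<in>nbrs adj x. g z)"
  using sum.reindex_bij_betw[OF orbit_facts(2)[OF y], of g] by simp

lemma wt_step:
  assumes y: "y \<in> nbrs adj x"
  shows "f (m x y) - f x = ((\<Sum>z\<in>nbrs adj x. f z) / real (deg adj x) - f x)
           - (wt adj m f x (m x y) - wt adj m f x y)"
proof -
  define d where "d = deg adj x"
  define a where "a j = f ((m x ^^ j) y)" for j
  have dpos: "d > 0" using orbit_facts(3)[OF y] by (simp add: d_def)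
  have per: "a (Suc d) = a 1"
    using orbit_facts(1)[OF y] by (simp add: a_def d_def)
  have sumS: "(\<Sum>i<d. a (Suc i)) = (\<Sum>z\<in>nbrs adj x. f z)"
    using orbit_sum[OF y, of f] by (simp add: a_def d_def del: funpow.simps)
  have w1: "wt adj m f x (m x y) = (- 1 / real d) * (\<Sum>i<d. real i * a (Suc (Suc i)))"
    unfolding wt_def a_def d_def by (simp only: funpow_Suc_right comp_apply)
  have w0: "wt adj m f x y = (- 1 / real d) * (\<Sum>i<d. real i * a (Suc i))"
    unfolding wt_def a_def d_def by simp
  have "wt adj m f x (m x y) - wt adj m f x y
        = (- 1 / real d) * ((\<Sum>i<d. real i * a (Suc (Suc i))) - (\<Sum>i<d. real i * a (Suc i)))"
    by (simp add: w1 w0 algebra_simps)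
  also have "\<dots> = (- 1 / real d) * (real d * a 1 - (\<Sum>i<d. a (Suc i)))"
    by (simp add: shift_alg[OF per])
  also have "\<dots> = (\<Sum>i<d. a (Suc i)) / real d - a 1"
    using dpos by (simp add: field_simps)
  finally show ?thesis using sumS by (simp add: a_def d_def)
qed

lemma wt_bound:
  assumes y: "y \<in> nbrs adj x"
  shows "\<bar>wt adj m f x y\<bar> \<le> (\<Sum>z\<in>nbrs adj x. \<bar>f z\<bar>)"
proof -
  define d where "d = deg adj x"
  have dpos: "d > 0" using orbit_facts(3)[OF y] by (simp add: d_def)
  have "\<bar>wt adj m f x y\<bar> = (1 / real d) * \<bar>\<Sum>i<d. real i * f ((m x ^^ Suc i) y)\<bar>"
    by (simp add: wt_def d_def abs_mult)
  also have "\<dots> \<le> (1 / real d) * (\<Sum>i<d. real d * \<bar>f ((m x ^^ Suc i) y)\<bar>)"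
  proof (rule mult_left_mono)
    have "\<bar>\<Sum>i<d. real i * f ((m x ^^ Suc i) y)\<bar> \<le> (\<Sum>i<d. \<bar>real i * f ((m x ^^ Suc i) y)\<bar>)"
      by (rule sum_abs)
    also have "\<dots> \<le> (\<Sum>i<d. real d * \<bar>f ((m x ^^ Suc i) y)\<bar>)"
      by (rule sum_mono) (auto simp: abs_mult intro: mult_right_mono)
    finally show "\<bar>\<Sum>i<d. real i * f ((m x ^^ Suc i) y)\<bar> \<le> (\<Sum>i<d. real d * \<bar>f ((m x ^^ Suc i) y)\<bar>)" .
  qed simp
  also have "\<dots> = (\<Sum>i<d. \<bar>f ((m x ^^ Suc i) y)\<bar>)"
    using dpos by (simp add: sum_distrib_left[symmetric])
  also have "\<dots> = (\<Sum>z\<in>nbrs adj x. \<bar>f z\<bar>)"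
    unfolding d_def by (rule orbit_sum[OF y])
  finally show ?thesis .
qed

lemma wt_zero:
  assumes y: "y \<in> nbrs adj x" and z: "\<forall>z\<in>nbrs adj x. f z = 0"
  shows "wt adj m f x y = 0"
proof -
  have "\<forall>i<deg adj x. f ((m x ^^ Suc i) y) = 0"
    using orbit_facts(2)[OF y] z by (auto simp: bij_betw_def)
  then show ?thesis by (simp add: wt_def)
qed

end

locale gr =
  fixes adj :: "'v \<Rightarrow> 'v \<Rightarrow> bool" and v0 :: 'v
  assumes sym: "adj x y \<Longrightarrow> adj y x" and irr: "\<not> adj x x"
    and lf: "finite (nbrs adj x)" and ne: "nbrs adj x \<noteq> {}" and conn: "adj\<^sup>*\<^sup>* x y"
begin

abbreviation "p \<equiv> srw_prob adj"
declare srw_prob.simps(2)[simp del]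
lemmas p_Suc = srw_prob.simps(2)
abbreviation "dg x \<equiv> real (deg adj x)"

lemma dpos: "dg x > 0"
  using lf ne by (simp add: deg_def card_gt_0_iff)

lemma nbrs_iff: "z \<in> nbrs adj x \<longleftrightarrow> adj x z" by (simp add: nbrs_def)

lemma sum_nbrs_const: "(\<Sum>z\<in>nbrs adj x. c / dg x) = c"
  using dpos[of x] by (simp add: deg_def)

lemma p_bounds: "0 \<le> p k x y \<and> p k x y \<le> 1"
proof (induction k arbitrary: x)
  case 0 then show ?case by simp
next
  case (Suc k)
  have "(\<Sum>z\<in>nbrs adj x. 1 / dg x * p k z y) \<le> (\<Sum>z\<in>nbrs adj x. 1 / dg x)"
    by (rule sum_mono) (use Suc dpos[of x] in \<open>auto intro!: divide_right_mono\<close>)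
  also have "\<dots> = 1" using sum_nbrs_const[where x=x and c=1] by simp
  finally show ?case using Suc dpos[of x] by (auto intro: sum_nonneg simp: p_Suc)
qed

lemma p_nonneg: "0 \<le> p k x y" using p_bounds by blast
lemma p_le1: "p k x y \<le> 1" using p_bounds by blast

lemma last_step: "p (Suc k) x y = (\<Sum>z\<in>nbrs adj y. p k x z / dg z)"
proof (induction k arbitrary: x)
  case 0
  have "p (Suc 0) x y = (\<Sum>z\<in>nbrs adj x. if z = y then 1 / dg x else 0)"
    by (simp add: p_Suc) (rule sum.cong, auto)
  then have l: "p (Suc 0) x y = (if adj x y then 1 / dg x else 0)"
    using lf[of x] by (simp add: nbrs_iff)
  have "(\<Sum>z\<in>nbrs adj y. p 0 x z / dg z) = (\<Sum>z\<in>nbrs adj y. if z = x then 1 / dg x else 0)"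
    by (rule sum.cong) auto
  then have r: "(\<Sum>z\<in>nbrs adj y. p 0 x z / dg z) = (if adj y x then 1 / dg x else 0)"
    using lf[of y] by (simp add: nbrs_iff)
  show ?case using l r sym by metis
next
  case (Suc k)
  have "p (Suc (Suc k)) x y = (\<Sum>z\<in>nbrs adj x. 1 / dg x * (\<Sum>w\<in>nbrs adj y. p k z w / dg w))"
    by (simp add: Suc p_Suc[of _ "Suc k"])
  also have "\<dots> = (\<Sum>w\<in>nbrs adj y. (\<Sum>z\<in>nbrs adj x. 1 / dg x * p k z w) / dg w)"
    by (simp add: sum_distrib_left sum_divide_distrib sum.swap[of _ "nbrs adj x"])
  also have "\<dots> = (\<Sum>w\<in>nbrs adj y. p (Suc k) x w / dg w)" by (simp add: p_Suc)
  finally show ?case .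
qed

lemma summable_p:
  assumes tr: "transient adj v0"
  shows "summable (\<lambda>k. p k v0 x)"
proof -
  have "adj\<^sup>*\<^sup>* v0 x" by (rule conn)
  then show ?thesis
  proof (induction rule: rtranclp_induct)
    case base then show ?case using tr by (simp add: transient_def)
  next
    case (step z x)
    have s: "summable (\<lambda>k. dg x * p (Suc k) v0 z)"
      using step(3) summable_Suc_iff[where f="\<lambda>k. p k v0 z"] by (intro summable_mult) simp
    have "p k v0 x \<le> dg x * p (Suc k) v0 z" for k
    proof -
      have "p k v0 x / dg x \<le> (\<Sum>w\<in>nbrs adj z. p k v0 w / dg w)"
        by (rule member_le_sum) (use step(2) lf p_nonneg dpos in \<open>auto simp: nbrs_iff\<close>)
      then show ?thesis using dpos[of x] by (simp add: last_step field_simps)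
    qed
    then show ?case
      by (intro summable_comparison_test[OF _ s]) (auto simp: p_nonneg)
  qed
qed

lemma green_eq:
  assumes tr: "transient adj v0"
  shows "green adj v0 x = (if x = v0 then 1 else 0) + (\<Sum>z\<in>nbrs adj x. green adj v0 z / dg z)"
proof -
  have "green adj v0 x = p 0 v0 x + (\<Sum>k. p (Suc k) v0 x)"
    using suminf_split_head[OF summable_p[OF tr, of x]] by (simp add: green_def)
  also have "(\<Sum>k. p (Suc k) v0 x) = (\<Sum>k. \<Sum>z\<in>nbrs adj x. p k v0 z / dg z)"
    by (simp add: last_step)
  also have "\<dots> = (\<Sum>z\<in>nbrs adj x. \<Sum>k. p k v0 z / dg z)"
    by (rule suminf_sum) (intro summable_divide summable_p[OF tr])
  also have "\<dots> = (\<Sum>z\<in>nbrs adj x. green adj v0 z / dg z)"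
    by (simp add: green_def suminf_divide[OF summable_p[OF tr]])
  finally show ?thesis by simp
qed

lemma green_nonneg: "transient adj v0 \<Longrightarrow> 0 \<le> green adj v0 x"
  unfolding green_def by (intro suminf_nonneg summable_p) (auto simp: p_nonneg)

lemma green_ge1: "transient adj v0 \<Longrightarrow> 1 \<le> green adj v0 v0"
proof -
  assume tr: "transient adj v0"
  have "sum (\<lambda>k. p k v0 v0) {..<1} \<le> green adj v0 v0"
    unfolding green_def by (intro sum_le_suminf summable_p tr) (auto simp: p_nonneg)
  then show ?thesis by simp
qed

abbreviation "b \<equiv> avoid_prob adj v0"
declare avoid_prob.simps(2)[simp del]
lemmas b_Suc = avoid_prob.simps(2)

lemma b_bounds: "0 \<le> b k x \<and> b k x \<le> 1"
proof (induction k arbitrary: x)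
  case 0 then show ?case by simp
next
  case (Suc k)
  have "(\<Sum>z\<in>nbrs adj x. 1 / dg x * (if z = v0 then 0 else b k z)) \<le> (\<Sum>z\<in>nbrs adj x. 1 / dg x)"
    by (rule sum_mono) (use Suc dpos[of x] in \<open>auto intro!: divide_right_mono\<close>)
  also have "\<dots> = 1" using sum_nbrs_const[where x=x and c=1] by simp
  finally show ?case using Suc dpos[of x] by (auto intro!: sum_nonneg simp: b_Suc)
qed

lemma b_mono: "b (Suc k) x \<le> b k x"
proof (induction k arbitrary: x)
  case 0 then show ?case using b_bounds[of "Suc 0" x] by simp
next
  case (Suc k)
  have "b (Suc (Suc k)) x = (\<Sum>z\<in>nbrs adj x. 1 / dg x * (if z = v0 then 0 else b (Suc k) z))"
    by (rule b_Suc)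
  also have "\<dots> \<le> (\<Sum>z\<in>nbrs adj x. 1 / dg x * (if z = v0 then 0 else b k z))"
    by (rule sum_mono) (use Suc dpos[of x] in \<open>auto intro!: divide_right_mono\<close>)
  also have "\<dots> = b (Suc k) x" by (rule b_Suc[symmetric])
  finally show ?case .
qed

lemma renewal: "(if x \<noteq> v0 then b n x else 0) + (\<Sum>j\<le>n. p j x v0 * b (n - j) v0) = 1"
proof (induction n arbitrary: x)
  case 0 then show ?case by simp
next
  case (Suc n)
  have "(\<Sum>j\<le>Suc n. p j x v0 * b (Suc n - j) v0)
        = p 0 x v0 * b (Suc n) v0 + (\<Sum>j\<le>n. p (Suc j) x v0 * b (n - j) v0)"
    by (subst sum.atMost_Suc_shift) simp
  also have "(\<Sum>j\<le>n. p (Suc j) x v0 * b (n - j) v0)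
        = 1 / dg x * (\<Sum>z\<in>nbrs adj x. \<Sum>j\<le>n. p j z v0 * b (n - j) v0)"
  proof -
    have "(\<Sum>j\<le>n. p (Suc j) x v0 * b (n - j) v0)
          = (\<Sum>j\<le>n. \<Sum>z\<in>nbrs adj x. 1 / dg x * (p j z v0 * b (n - j) v0))"
      by (simp add: p_Suc sum_distrib_right mult.assoc)
    also have "\<dots> = (\<Sum>z\<in>nbrs adj x. \<Sum>j\<le>n. 1 / dg x * (p j z v0 * b (n - j) v0))"
      by (rule sum.swap)
    also have "\<dots> = 1 / dg x * (\<Sum>z\<in>nbrs adj x. \<Sum>j\<le>n. p j z v0 * b (n - j) v0)"
      by (simp add: sum_distrib_left)
    finally show ?thesis .
  qed
  also have "\<dots> = 1 / dg x * (\<Sum>z\<in>nbrs adj x. 1 - (if z \<noteq> v0 then b n z else 0))"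
    using Suc.IH by (metis (no_types, lifting) add_diff_cancel_left' sum.cong)
  also have "\<dots> = 1 - b (Suc n) x"
  proof -
    have e: "b (Suc n) x = 1 / dg x * (\<Sum>z\<in>nbrs adj x. if z \<noteq> v0 then b n z else 0)"
      by (simp add: b_Suc sum_distrib_left) (rule sum.cong, auto)
    have "(\<Sum>z\<in>nbrs adj x. 1 - (if z \<noteq> v0 then b n z else 0))
          = dg x - (\<Sum>z\<in>nbrs adj x. if z \<noteq> v0 then b n z else 0)"
      by (simp add: sum_subtractf deg_def)
    then show ?thesis using e dpos[of x] by (simp add: field_simps)
  qed
  finally show ?case by auto
qed

lemma b_tendsto: "(\<lambda>k. b k v0) \<longlonglongrightarrow> escape_prob adj v0"
proof -
  have "antimono (\<lambda>k. b k v0)" by (rule antimonoI) (meson b_mono lift_Suc_antimono_le)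
  moreover have "bdd_below (range (\<lambda>k. b k v0))" using b_bounds by (intro bdd_belowI[of _ 0]) auto
  ultimately show ?thesis unfolding escape_prob_def by (rule LIMSEQ_decseq_INF[rotated])
qed

lemma b_ge_alpha: "escape_prob adj v0 \<le> b k v0"
  unfolding escape_prob_def by (rule cINF_lower) (use b_bounds in \<open>auto intro: bdd_belowI[of _ 0]\<close>)

lemma alpha_green:
  assumes tr: "transient adj v0"
  shows "escape_prob adj v0 * green adj v0 v0 = 1"
proof -
  define \<alpha> where "\<alpha> = escape_prob adj v0"
  define u where "u = (\<lambda>k. p k v0 v0)"
  have su: "summable u" using summable_p[OF tr] by (simp add: u_def)
  have G: "green adj v0 v0 = suminf u" by (simp add: green_def u_def)
  have ren: "(\<Sum>j\<le>n. u j * b (n - j) v0) = 1" for n using renewal[of v0 n] by (simp add: u_def)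
  have a0: "0 \<le> \<alpha>" unfolding \<alpha>_def using b_tendsto b_bounds
    by (intro LIMSEQ_le_const[OF b_tendsto]) auto
  have u0: "0 \<le> u k" for k by (simp add: u_def p_nonneg)
  have le: "\<alpha> * suminf u \<le> 1"
  proof -
    have "\<alpha> * sum u {..<n} \<le> 1" for n
    proof -
      have "\<alpha> * sum u {..<n} \<le> \<alpha> * sum u {..n}"
        using a0 u0 by (intro mult_left_mono sum_mono2) auto
      also have "\<dots> = (\<Sum>j\<le>n. u j * \<alpha>)" by (simp add: sum_distrib_left ac_simps)
      also have "\<dots> \<le> (\<Sum>j\<le>n. u j * b (n - j) v0)"
        using u0 b_ge_alpha by (intro sum_mono mult_left_mono) (auto simp: \<alpha>_def)
      finally show ?thesis using ren by simp
    qed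
    then have "suminf (\<lambda>k. \<alpha> * u k) \<le> 1"
      by (intro suminf_le_const summable_mult su) (simp add: sum_distrib_left)
    then show ?thesis using suminf_mult[OF su, of \<alpha>] by simp
  qed
  have ge: "1 \<le> b M v0 * suminf u" for M
  proof -
    have tail: "(\<lambda>n. \<Sum>i<M. u (n - i)) \<longlonglongrightarrow> 0"
    proof -
      have "(\<lambda>n. u (n - i)) \<longlonglongrightarrow> 0" for i
        by (rule LIMSEQ_offset[where k=i]) (simp add: summable_LIMSEQ_zero[OF su])
      then show ?thesis using tendsto_sum[of "{..<M}" "\<lambda>i n. u (n - i)" "\<lambda>_. 0"] by simp
    qed
    have bound: "1 \<le> b M v0 * suminf u + (\<Sum>i<M. u (n - i))" if "n \<ge> M" for n
    proof -
      have split: "{..n} = {..n - M} \<union> {n - M<..n}" using that by auto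
      have "1 = (\<Sum>j\<le>n. u j * b (n - j) v0)" using ren by simp
      also have "\<dots> = (\<Sum>j\<in>{..n - M}. u j * b (n - j) v0) + (\<Sum>j\<in>{n - M<..n}. u j * b (n - j) v0)"
        by (subst split, rule sum.union_disjoint) auto
      also have "(\<Sum>j\<in>{..n - M}. u j * b (n - j) v0) \<le> (\<Sum>j\<in>{..n - M}. u j * b M v0)"
      proof (rule sum_mono)
        fix j assume "j \<in> {..n - M}"
        then have "M \<le> n - j" using that by auto
        then have "b (n - j) v0 \<le> b M v0"
          by (induction rule: dec_induct) (auto intro: order_trans[OF b_mono])
        then show "u j * b (n - j) v0 \<le> u j * b M v0" using u0 by (intro mult_left_mono)
      qed
      also have "\<dots> = b M v0 * sum u {..n - M}" by (simp add: sum_distrib_left ac_simps)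
      also have "\<dots> \<le> b M v0 * suminf u"
        using b_bounds u0 by (intro mult_left_mono sum_le_suminf su) auto
      also have "(\<Sum>j\<in>{n - M<..n}. u j * b (n - j) v0) \<le> (\<Sum>j\<in>{n - M<..n}. u j)"
        using u0 b_bounds by (intro sum_mono) (auto intro: mult_left_le)
      also have "(\<Sum>j\<in>{n - M<..n}. u j) = (\<Sum>i<M. u (n - i))"
      proof (rule sum.reindex_bij_witness[of _ "\<lambda>i. n - i" "\<lambda>j. n - j"])
      qed (use that in auto)
      finally show ?thesis by simp
    qed
    have "(\<lambda>n. b M v0 * suminf u + (\<Sum>i<M. u (n - i))) \<longlonglongrightarrow> b M v0 * suminf u + 0"
      by (intro tendsto_add tendsto_const tail)
    then have "1 \<le> b M v0 * suminf u + 0"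
      by (rule LIMSEQ_le_const) (use bound in auto)
    then show ?thesis by simp
  qed
  have "(\<lambda>M. b M v0 * suminf u) \<longlonglongrightarrow> \<alpha> * suminf u"
    unfolding \<alpha>_def by (intro tendsto_mult b_tendsto tendsto_const)
  then have "1 \<le> \<alpha> * suminf u" by (rule LIMSEQ_le_const) (use ge in auto)
  then show ?thesis using le G \<alpha>_def by simp
qed

end

locale exper = gr adj v0 for adj :: "'v \<Rightarrow> 'v \<Rightarrow> bool" and v0 +
  fixes m :: "'v \<Rightarrow> 'v \<Rightarrow> 'v" and \<rho>0 :: "'v \<Rightarrow> 'v" and n :: nat
  assumes rm: "rotor_mechanism adj m" and rc: "rotor_config adj \<rho>0" and npos: "n > 0"
begin

definition "st t = exp_state m v0 \<rho>0 n t"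
definition "rho t = fst (st t)"
definition "X t = fst (snd (st t))"
definition "L t = snd (snd (st t))"
definition "idx t = (t + 1) mod n"
definition "frz t i \<longleftrightarrow> X t i = v0 \<and> L t i"
definition "mv t \<longleftrightarrow> \<not> frz t (idx t)"
definition "xs t = X t (idx t)"
definition "tg t = m (xs t) (rho t (xs t))"

lemma lfa: "locally_finite adj" using lf by (simp add: locally_finite_def)

lemma st_Suc: "st (Suc t) = (if mv t then ((rho t)(xs t := tg t), (X t)(idx t := tg t),
     (L t)(idx t := (L t (idx t) \<or> tg t \<noteq> v0))) else st t)"
proof -
  obtain a c e where s: "st t = (a, c, e)" by (cases "st t") auto
  have "st (Suc t) = exp_step m v0 n t (st t)" by (simp add: st_def)
  then show ?thesis using s
    by (simp add: exp_step_def Let_def rho_def X_def L_def idx_def frz_def mv_def xs_def tg_def)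
qed

lemma rho_Suc: "rho (Suc t) = (if mv t then (rho t)(xs t := tg t) else rho t)"
  by (simp add: rho_def st_Suc)
lemma X_Suc: "X (Suc t) = (if mv t then (X t)(idx t := tg t) else X t)"
  by (simp add: X_def st_Suc)
lemma L_Suc: "L (Suc t) = (if mv t then (L t)(idx t := (L t (idx t) \<or> tg t \<noteq> v0)) else L t)"
  by (simp add: L_def st_Suc)
lemma st0: "rho 0 = \<rho>0" "X 0 = (\<lambda>_. v0)" "L 0 = (\<lambda>_. False)"
  by (simp_all add: rho_def X_def L_def st_def)

lemma idx_lt: "idx t < n" using npos by (simp add: idx_def)

lemma rc_t: "rho t x \<in> nbrs adj x"
proof (induction t)
  case 0 then show ?case using rc by (simp add: st0 rotor_config_def nbrs_def)
next
  case (Suc t)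
  then show ?case using m_in[OF rm lfa] by (auto simp: rho_Suc tg_def)
qed

lemma tg_nbr: "tg t \<in> nbrs adj (xs t)"
  unfolding tg_def by (rule m_in[OF rm lfa rc_t])

lemma tg_ne: "tg t \<noteq> xs t" using tg_nbr[of t] irr[of "xs t"] by (auto simp: nbrs_def)

lemma L_iff: "L t i \<longleftrightarrow> (\<exists>s\<le>t. X s i \<noteq> v0)"
proof (induction t)
  case 0 then show ?case by (simp add: st0)
next
  case (Suc t)
  show ?case
  proof (cases "mv t \<and> i = idx t")
    case True
    then show ?thesis using Suc by (auto simp: L_Suc X_Suc le_Suc_eq)
  next
    case False
    then have "X (Suc t) i = X t i" "L (Suc t) i = L t i" by (auto simp: L_Suc X_Suc)
    then show ?thesis using Suc by (auto simp: le_Suc_eq)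
  qed
qed

lemma L_Suc_mono: "L t i \<Longrightarrow> L (Suc t) i" by (auto simp: L_Suc)

lemma L_mono: "t \<le> t' \<Longrightarrow> L t i \<Longrightarrow> L t' i"
  by (induction rule: dec_induct) (auto intro: L_Suc_mono)

lemma frz_Suc: "frz t i \<Longrightarrow> frz (Suc t) i"
  by (auto simp: frz_def X_Suc L_Suc mv_def)

lemma frz_mono: "t \<le> t' \<Longrightarrow> frz t i \<Longrightarrow> frz t' i"
  by (induction rule: dec_induct) (auto intro: frz_Suc)

lemma returned_iff: "returned m v0 \<rho>0 n t i \<longleftrightarrow> frz t i"
proof -
  have "pos m v0 \<rho>0 n s i = X s i" for s by (simp add: pos_def X_def st_def)
  then have r: "returned m v0 \<rho>0 n t i \<longleftrightarrow> X t i = v0 \<and> (\<exists>s<t. X s i \<noteq> v0)"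
    by (simp add: returned_def)
  show ?thesis unfolding r frz_def L_iff
    by (auto simp: le_less)
qed

lemma untouched: "(\<forall>s'<s. idx s' \<noteq> i) \<Longrightarrow> X s i = v0 \<and> \<not> L s i"
proof (induction s)
  case 0 then show ?case by (simp add: st0)
next
  case (Suc s)
  then show ?case by (auto simp: X_Suc L_Suc)
qed

lemma idx_inj: "s' < s \<Longrightarrow> s < n \<Longrightarrow> idx s' \<noteq> idx s"
proof -
  assume a: "s' < s" "s < n"
  then have m1: "(s' + 1) mod n = s' + 1" by simp
  show ?thesis
  proof (cases "s + 1 < n")
    case True then show ?thesis using a m1 by (simp add: idx_def)
  next
    case False
    then have "s + 1 = n" using a by simp
    then show ?thesis using m1 by (simp add: idx_def)
  qed
qed

lemma first_moves: "s < n \<Longrightarrow> mv s \<and> xs s = v0"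
  using untouched[of s "idx s"] idx_inj[of _ s] by (auto simp: mv_def frz_def xs_def)

lemma dep0_inj:
  assumes "s < s'" "mv s" "xs s = v0" "mv s'" "xs s' = v0"
  shows "idx s \<noteq> idx s'"
proof
  assume e: "idx s = idx s'"
  have "tg s \<noteq> v0" using tg_ne[of s] assms(3) by simp
  then have "L (Suc s) (idx s)" using assms(2) by (simp add: L_Suc)
  then have "L s' (idx s)" using assms(1) L_mono[of "Suc s" s' "idx s"] by simp
  then have "frz s' (idx s')" using assms(5) e unfolding frz_def xs_def by metis
  then show False using assms(4) by (simp add: mv_def)
qed

lemma arr0_inj:
  assumes "s < s'" "mv s" "tg s = v0" "mv s'"
  shows "idx s \<noteq> idx s'"
proof
  assume e: "idx s = idx s'"
  have "xs s \<noteq> v0" using tg_ne[of s] assms(3) by simp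
  then have "X s (idx s) \<noteq> v0" by (simp add: xs_def)
  then have "L s (idx s)" unfolding L_iff by blast
  then have "frz (Suc s) (idx s)" using assms(2,3) by (simp add: frz_def L_Suc X_Suc)
  then have "frz s' (idx s)" using assms(1) frz_mono[of "Suc s" s' "idx s"] by simp
  then show False using assms(4) e unfolding mv_def by metis
qed

definition "K t = card {s. s < t \<and> mv s \<and> xs s = v0}"

lemma K_le: "K t \<le> n"
proof -
  have "inj_on idx {s. s < t \<and> mv s \<and> xs s = v0}"
    by (rule inj_onI) (metis (mono_tags, lifting) dep0_inj mem_Collect_eq nat_neq_iff)
  then have "card {s. s < t \<and> mv s \<and> xs s = v0} \<le> card {..<n}"
    by (rule card_inj_on_le) (auto simp: idx_lt)
  then show ?thesis by (simp add: K_def)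
qed

lemma K_ge: "n \<le> t \<Longrightarrow> n \<le> K t"
proof -
  assume "n \<le> t"
  then have "{..<n} \<subseteq> {s. s < t \<and> mv s \<and> xs s = v0}" using first_moves by auto
  then have "card {..<n} \<le> K t" unfolding K_def by (rule card_mono[rotated]) simp
  then show ?thesis by simp
qed

definition "lap f x = (\<Sum>z\<in>nbrs adj x. f z) / dg x - f x"

lemma invariant:
  assumes A: "finite A" "xs ` {s. s < t \<and> mv s} \<subseteq> A"
  shows "(\<Sum>i<n. f (X t i)) + (\<Sum>x\<in>A. wt adj m f x (rho t x) - wt adj m f x (\<rho>0 x))
         = real n * f v0 + (\<Sum>s\<in>{s. s < t \<and> mv s}. lap f (xs s))"
  using A(2)
proof (induction t)
  case 0 then show ?case by (simp add: st0)
next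
  case (Suc t)
  have sub: "xs ` {s. s < t \<and> mv s} \<subseteq> A" using Suc.prems by auto
  note IH = Suc.IH[OF sub]
  show ?case
  proof (cases "mv t")
    case False
    then have "{s. s < Suc t \<and> mv s} = {s. s < t \<and> mv s}" by (auto simp: less_Suc_eq)
    then show ?thesis using IH False by (simp add: X_Suc rho_Suc)
  next
    case True
    have set: "{s. s < Suc t \<and> mv s} = insert t {s. s < t \<and> mv s}" using True by (auto simp: less_Suc_eq)
    have xA: "xs t \<in> A" using Suc.prems True by auto
    define x where "x = xs t"
    have s1: "(\<Sum>i<n. f (X (Suc t) i)) = (\<Sum>i<n. f (X t i)) + f (tg t) - f (xs t)"
    proof -
      have "(\<Sum>i<n. f (X (Suc t) i)) = (\<Sum>i<n. f (((X t)(idx t := tg t)) i))" using True by (simp add: X_Suc)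
      also have "\<dots> = f (tg t) + (\<Sum>i\<in>{..<n} - {idx t}. f (X t i))"
        by (subst sum.remove[of _ "idx t"]) (auto simp: idx_lt intro!: sum.cong)
      also have "(\<Sum>i<n. f (X t i)) = f (X t (idx t)) + (\<Sum>i\<in>{..<n} - {idx t}. f (X t i))"
        by (subst sum.remove[of _ "idx t"]) (auto simp: idx_lt)
      ultimately show ?thesis by (simp add: xs_def)
    qed
    have s2: "(\<Sum>y\<in>A. wt adj m f y (rho (Suc t) y) - wt adj m f y (\<rho>0 y))
        = (\<Sum>y\<in>A. wt adj m f y (rho t y) - wt adj m f y (\<rho>0 y))
          + (wt adj m f x (tg t) - wt adj m f x (rho t x))"
    proof -
      have "(\<Sum>y\<in>A. wt adj m f y (rho (Suc t) y) - wt adj m f y (\<rho>0 y))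
           = (wt adj m f x (tg t) - wt adj m f x (\<rho>0 x)) + (\<Sum>y\<in>A - {x}. wt adj m f y (rho t y) - wt adj m f y (\<rho>0 y))"
        using True xA A(1) by (subst sum.remove[of _ x]) (auto simp: rho_Suc x_def intro!: sum.cong)
      moreover have "(\<Sum>y\<in>A. wt adj m f y (rho t y) - wt adj m f y (\<rho>0 y))
           = (wt adj m f x (rho t x) - wt adj m f x (\<rho>0 x)) + (\<Sum>y\<in>A - {x}. wt adj m f y (rho t y) - wt adj m f y (\<rho>0 y))"
        using xA A(1) by (subst sum.remove[of _ x]) (auto simp: x_def)
      ultimately show ?thesis by simp
    qed
    have key: "f (tg t) - f (xs t) = lap f (xs t) - (wt adj m f x (tg t) - wt adj m f x (rho t x))"
      using wt_step[OF rm lfa rc_t[of t x], of f] by (simp add: tg_def x_def lap_def)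
    have s3: "(\<Sum>s\<in>{s. s < Suc t \<and> mv s}. lap f (xs s)) = lap f (xs t) + (\<Sum>s\<in>{s. s < t \<and> mv s}. lap f (xs s))"
      unfolding set by (subst sum.insert) auto
    show ?thesis using IH s1 s2 s3 key by simp
  qed
qed

end

context exper begin

lemma next_move:
  assumes i: "i < n" and nf: "\<not> frz t i"
  shows "\<exists>s\<ge>t. mv s \<and> idx s = i \<and> xs s = X t i"
proof -
  define c where "c = n * (t + 1) + i + n - 1"
  have "c + 1 = i + n * (t + 2)" unfolding c_def using npos by (simp add: algebra_simps)
  then have "idx c = (i + n * (t + 2)) mod n" unfolding idx_def by simp
  also have "\<dots> = i" using i by (simp only: mod_mult_self2 mod_less)
  finally have c1: "idx c = i" .
  have "1 * (t + 1) \<le> n * (t + 1)" using npos by (intro mult_le_mono1) simp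
  then have c2: "t \<le> c" unfolding c_def by simp
  define s where "s = (LEAST s. t \<le> s \<and> idx s = i)"
  have s1: "t \<le> s \<and> idx s = i" unfolding s_def by (rule LeastI[of _ c]) (use c1 c2 in simp)
  have s2: "idx s' \<noteq> i" if "t \<le> s'" "s' < s" for s'
  proof -
    have "\<not> (t \<le> s' \<and> idx s' = i)" using that(2) unfolding s_def by (rule not_less_Least)
    then show ?thesis using that(1) by simp
  qed
  have keep: "t + k \<le> s \<Longrightarrow> X (t + k) i = X t i \<and> L (t + k) i = L t i" for k
  proof (induction k)
    case 0 then show ?case by simp
  next
    case (Suc k)
    have tk: "t + k \<le> s" "t + k < s" using Suc.prems by simp_all
    have ne: "idx (t + k) \<noteq> i" using s2[of "t + k"] tk by simp
    have "X (Suc (t + k)) i = X (t + k) i" using ne by (simp add: X_Suc)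
    moreover have "L (Suc (t + k)) i = L (t + k) i" using ne by (simp add: L_Suc)
    ultimately show ?case using Suc.IH[OF tk(1)] by simp
  qed
  have "X s i = X t i \<and> L s i = L t i" using keep[of "s - t"] s1 by simp
  then have "\<not> frz s i \<and> X s i = X t i" using nf unfolding frz_def by simp
  then have "mv s \<and> xs s = X t i" using s1 unfolding mv_def xs_def by metis
  then show ?thesis using s1 by blast
qed

definition "cnt x t = card {s. s < t \<and> mv s \<and> xs s = x}"

lemma cnt_Suc: "cnt x (Suc t) = cnt x t + (if mv t \<and> xs t = x then 1 else 0)"
proof (cases "mv t \<and> xs t = x")
  case True
  then have "{s. s < Suc t \<and> mv s \<and> xs s = x} = insert t {s. s < t \<and> mv s \<and> xs s = x}"
    by (auto simp: less_Suc_eq)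
  then show ?thesis using True by (simp add: cnt_def)
next
  case False
  then have "{s. s < Suc t \<and> mv s \<and> xs s = x} = {s. s < t \<and> mv s \<and> xs s = x}"
    by (auto simp: less_Suc_eq)
  then show ?thesis using False by (simp add: cnt_def)
qed

lemma cnt_mono: "t \<le> t' \<Longrightarrow> cnt x t \<le> cnt x t'"
  by (induction rule: dec_induct) (auto simp: cnt_Suc intro: le_trans)

lemma rho_cnt: "rho t x = (m x ^^ cnt x t) (\<rho>0 x)"
proof (induction t)
  case 0 then show ?case by (simp add: st0 cnt_def)
next
  case (Suc t)
  then show ?case by (auto simp: rho_Suc cnt_Suc tg_def)
qed

lemma tg_cnt: "mv s \<Longrightarrow> xs s = x \<Longrightarrow> tg s = (m x ^^ Suc (cnt x s)) (\<rho>0 x)"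
  by (simp add: tg_def rho_cnt)

definition "infdep x \<longleftrightarrow> (\<forall>T. \<exists>s\<ge>T. mv s \<and> xs s = x)"
definition "infarr y \<longleftrightarrow> (\<forall>T. \<exists>s\<ge>T. mv s \<and> tg s = y)"

lemma cnt_unbounded: "infdep x \<Longrightarrow> \<exists>t. k \<le> cnt x t"
proof (induction k)
  case 0 then show ?case by simp
next
  case (Suc k)
  then obtain t where t: "k \<le> cnt x t" by blast
  obtain s where s: "s \<ge> t" "mv s" "xs s = x" using Suc.prems unfolding infdep_def by blast
  have "cnt x (Suc s) = cnt x s + 1" using s by (simp add: cnt_Suc)
  moreover have "cnt x t \<le> cnt x s" using s by (intro cnt_mono)
  ultimately show ?case using t by (intro exI[of _ "Suc s"]) simp
qed

lemma cnt_hits: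
  assumes inf: "infdep x" and v: "cnt x T \<le> v"
  shows "\<exists>s\<ge>T. mv s \<and> xs s = x \<and> cnt x s = v"
proof -
  obtain t where t: "Suc v \<le> cnt x t" using cnt_unbounded[OF inf] by blast
  define t1 where "t1 = (LEAST t. v < cnt x t)"
  have t1: "v < cnt x t1" unfolding t1_def by (rule LeastI[of _ t]) (use t in simp)
  have t1m: "\<not> v < cnt x t'" if "t' < t1" for t'
    using that unfolding t1_def by (rule not_less_Least)
  have "T < t1"
  proof (rule ccontr)
    assume "\<not> T < t1"
    then have "cnt x t1 \<le> cnt x T" by (intro cnt_mono) simp
    then show False using t1 v by simp
  qed
  then obtain s where s: "t1 = Suc s" by (cases t1) auto
  have "cnt x s \<le> v" using t1m[of s] s by simp
  moreover have "v < cnt x (Suc s)" using t1 s by simp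
  ultimately have "mv s \<and> xs s = x \<and> cnt x s = v"
    by (auto simp: cnt_Suc split: if_splits)
  moreover have "T \<le> s" using \<open>T < t1\<close> s by simp
  ultimately show ?thesis by blast
qed

lemma funpow_period:
  assumes "(f ^^ d) r = r" shows "(f ^^ (d * k)) r = r"
  by (induction k) (simp_all add: funpow_add assms)

lemma infdep_arr:
  assumes inf: "infdep x" and y: "y \<in> nbrs adj x"
  shows "\<exists>s\<ge>T'. mv s \<and> tg s = y"
proof -
  define r where "r = \<rho>0 x"
  have r: "r \<in> nbrs adj x" using rc by (simp add: r_def rotor_config_def nbrs_def)
  obtain j where j: "(m x ^^ j) r = y"
    using rm r y unfolding rotor_mechanism_def by blast
  define d where "d = deg adj x"
  have dpos: "0 < d" using orbit_facts(3)[OF rm lfa r] by (simp add: d_def)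
  have per: "(m x ^^ d) r = r" using orbit_facts(1)[OF rm lfa r] by (simp add: d_def)
  define c0 where "c0 = cnt x T'"
  define v where "v = j + d * (c0 + 1) - 1"
  have "1 * (c0 + 1) \<le> d * (c0 + 1)" using dpos by (intro mult_le_mono1) simp
  then have dk: "d * (c0 + 1) \<ge> c0 + 1" by simp
  have v1: "c0 \<le> v" unfolding v_def using dk by linarith
  have v2: "Suc v = j + d * (c0 + 1)" unfolding v_def using dk by linarith
  obtain s where s: "s \<ge> T'" "mv s" "xs s = x" "cnt x s = v"
    using cnt_hits[OF inf, of T' v] v1 by (auto simp: c0_def)
  have "tg s = (m x ^^ Suc v) r" using tg_cnt[OF s(2,3)] s(4) by (simp add: r_def)
  also have "\<dots> = (m x ^^ j) ((m x ^^ (d * (c0 + 1))) r)" unfolding v2 by (simp add: funpow_add)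
  also have "\<dots> = y" using funpow_period[OF per, of "c0 + 1"] j by (simp only:)
  finally show ?thesis using s by blast
qed

lemma infarr_dep:
  assumes inf: "infarr y" and y: "y \<noteq> v0"
  shows "infdep y"
  unfolding infdep_def
proof
  fix T
  obtain s where s: "s \<ge> T" "mv s" "tg s = y" using inf unfolding infarr_def by blast
  have X1: "X (Suc s) (idx s) = y" using s by (simp add: X_Suc)
  then have "\<not> frz (Suc s) (idx s)" using y by (simp add: frz_def)
  then obtain s' where "s' \<ge> Suc s" "mv s'" "xs s' = y"
    using next_move[OF idx_lt] X1 by metis
  then show "\<exists>s'\<ge>T. mv s' \<and> xs s' = y" using s by (intro exI[of _ s']) auto
qed

lemma unbounded_infinite: "(\<forall>T. \<exists>s\<ge>T. s \<in> S) \<Longrightarrow> infinite (S :: nat set)"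
  unfolding finite_nat_set_iff_bounded_le by (metis not_less_eq_eq)

lemma not_infarr0: "\<not> infarr v0"
proof
  assume "infarr v0"
  then have inf: "infinite {s. mv s \<and> tg s = v0}"
    by (intro unbounded_infinite) (auto simp: infarr_def)
  have "inj_on idx {s. mv s \<and> tg s = v0}"
    by (rule inj_onI) (metis (mono_tags, lifting) arr0_inj mem_Collect_eq nat_neq_iff)
  moreover have "finite (idx ` {s. mv s \<and> tg s = v0})"
    by (rule finite_subset[of _ "{..<n}"]) (auto simp: idx_lt)
  ultimately show False using inf finite_imageD by blast
qed

lemma not_infdep0: "\<not> infdep v0"
proof
  assume "infdep v0"
  then have inf: "infinite {s. mv s \<and> xs s = v0}"
    by (intro unbounded_infinite) (auto simp: infdep_def)
  have "inj_on idx {s. mv s \<and> xs s = v0}"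
    by (rule inj_onI) (metis (mono_tags, lifting) dep0_inj mem_Collect_eq nat_neq_iff)
  moreover have "finite (idx ` {s. mv s \<and> xs s = v0})"
    by (rule finite_subset[of _ "{..<n}"]) (auto simp: idx_lt)
  ultimately show False using inf finite_imageD by blast
qed

lemma no_infdep: "\<not> infdep x"
proof -
  have "adj\<^sup>*\<^sup>* x v0" by (rule conn)
  then show ?thesis
  proof (induction rule: converse_rtranclp_induct)
    case base then show ?case by (rule not_infdep0)
  next
    case (step x z)
    show ?case
    proof
      assume "infdep x"
      then have "infarr z" unfolding infarr_def
        using infdep_arr[of x z] step(1) by (auto simp: nbrs_def)
      then show False using step(3) not_infarr0 infarr_dep by (cases "z = v0") auto
    qed
  qed
qed

lemma finite_dep: "finite {s. mv s \<and> xs s = x}"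
  using no_infdep[of x] unfolding infdep_def finite_nat_set_iff_bounded_le
  by (metis (mono_tags, lifting) mem_Collect_eq nat_le_linear not_less_eq_eq)

lemma eventually_out:
  assumes S: "finite S"
  shows "\<exists>T. \<forall>t\<ge>T. \<forall>i<n. \<not> frz t i \<longrightarrow> X t i \<notin> S"
proof -
  have "finite (\<Union>x\<in>S. {s. mv s \<and> xs s = x})" using S finite_dep by blast
  then obtain T where T: "\<forall>s\<in>(\<Union>x\<in>S. {s. mv s \<and> xs s = x}). s \<le> T"
    unfolding finite_nat_set_iff_bounded_le by blast
  have "\<forall>t\<ge>Suc T. \<forall>i<n. \<not> frz t i \<longrightarrow> X t i \<notin> S"
  proof (intro allI impI)
    fix t i assume t: "Suc T \<le> t" and i: "i < n" and nf: "\<not> frz t i"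
    show "X t i \<notin> S"
    proof
      assume xS: "X t i \<in> S"
      obtain s where "s \<ge> t" "mv s" "xs s = X t i" using next_move[OF i nf] by blast
      then show False using T xS t by fastforce
    qed
  qed
  then show ?thesis by blast
qed

end

context gr begin

definition "hN N x = (\<Sum>k<N. p k v0 x) / dg x"
definition "TN N = {x. hN N x \<noteq> 0} \<union> {x. \<exists>z\<in>nbrs adj x. hN N z \<noteq> 0}"
definition "CN m N = (\<Sum>x\<in>TN N. 2 * (\<Sum>z\<in>nbrs adj x. \<bar>hN N z\<bar>))"

lemma p_supp_finite: "finite {x. p k v0 x \<noteq> 0}"
proof (induction k)
  case 0
  have "{x. p 0 v0 x \<noteq> 0} = {v0}" by auto
  then show ?case by simp
next
  case (Suc k)
  have "{x. p (Suc k) v0 x \<noteq> 0} \<subseteq> (\<Union>z\<in>{x. p k v0 x \<noteq> 0}. nbrs adj z)"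
  proof
    fix x assume "x \<in> {x. p (Suc k) v0 x \<noteq> 0}"
    then have "(\<Sum>z\<in>nbrs adj x. p k v0 z / dg z) \<noteq> 0" by (simp add: last_step)
    then obtain z where "z \<in> nbrs adj x" "p k v0 z \<noteq> 0"
      by (metis (mono_tags, lifting) div_0 sum.neutral)
    then show "x \<in> (\<Union>z\<in>{x. p k v0 x \<noteq> 0}. nbrs adj z)" using sym by (auto simp: nbrs_def)
  qed
  moreover have "finite (\<Union>z\<in>{x. p k v0 x \<noteq> 0}. nbrs adj z)" using Suc lf by blast
  ultimately show ?case by (rule finite_subset)
qed

lemma hN_supp_finite: "finite {x. hN N x \<noteq> 0}"
proof -
  have "{x. hN N x \<noteq> 0} \<subseteq> (\<Union>k<N. {x. p k v0 x \<noteq> 0})"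
  proof
    fix x assume "x \<in> {x. hN N x \<noteq> 0}"
    then have "(\<Sum>k<N. p k v0 x) \<noteq> 0" by (auto simp: hN_def)
    then obtain k where "k < N" "p k v0 x \<noteq> 0" by (metis (mono_tags, lifting) lessThan_iff sum.neutral)
    then show "x \<in> (\<Union>k<N. {x. p k v0 x \<noteq> 0})" by blast
  qed
  moreover have "finite (\<Union>k<N. {x. p k v0 x \<noteq> 0})" using p_supp_finite by blast
  ultimately show ?thesis by (rule finite_subset)
qed

lemma TN_finite: "finite (TN N)"
proof -
  have "{x. \<exists>z\<in>nbrs adj x. hN N z \<noteq> 0} \<subseteq> (\<Union>z\<in>{x. hN N x \<noteq> 0}. nbrs adj z)"
    using sym by (auto simp: nbrs_def)
  moreover have "finite (\<Union>z\<in>{x. hN N x \<noteq> 0}. nbrs adj z)" using hN_supp_finite lf by blast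
  ultimately have "finite {x. \<exists>z\<in>nbrs adj x. hN N z \<noteq> 0}" by (rule finite_subset)
  then show ?thesis unfolding TN_def using hN_supp_finite by simp
qed

lemma hN_nonneg: "0 \<le> hN N x"
  unfolding hN_def using dpos[of x] by (auto intro!: divide_nonneg_pos sum_nonneg p_nonneg)

lemma hN_lap: "(\<Sum>z\<in>nbrs adj x. hN N z) / dg x - hN N x = (p N v0 x - (if x = v0 then 1 else 0)) / dg x"
proof -
  have "(\<Sum>z\<in>nbrs adj x. hN N z) = (\<Sum>k<N. \<Sum>z\<in>nbrs adj x. p k v0 z / dg z)"
    unfolding hN_def by (simp add: sum_divide_distrib sum.swap[of _ "nbrs adj x"])
  also have "\<dots> = (\<Sum>k<N. p (Suc k) v0 x)" by (simp add: last_step)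
  also have "\<dots> = (\<Sum>k<N. p k v0 x) + p N v0 x - p 0 v0 x"
    using sum_lessThan_telescope[of "\<lambda>k. p k v0 x" N] by (simp add: sum_subtractf)
  finally have eq: "(\<Sum>z\<in>nbrs adj x. hN N z) = (\<Sum>k<N. p k v0 x) + p N v0 x - p 0 v0 x" .
  have p0: "p 0 v0 x = (if x = v0 then 1 else 0)" by auto
  show ?thesis unfolding eq by (simp add: hN_def diff_divide_distrib add_divide_distrib)
qed

lemma green_lap:
  assumes tr: "transient adj v0"
  shows "(\<Sum>z\<in>nbrs adj x. green adj v0 z / dg z) / dg x - green adj v0 x / dg x
         = - (if x = v0 then 1 else 0) / dg x"
  using green_eq[OF tr, of x] dpos[of x] by (simp add: field_simps)

end

context exper begin

definition "Eset = {i. i < n \<and> (\<forall>t. \<not> frz t i)}"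
definition "Rset t = {i. i < n \<and> frz t i}"

lemma escapes_eq: "escapes m v0 \<rho>0 n = card Eset"
  by (simp add: escapes_def Eset_def returned_iff)

lemma E_R_le: "card Eset + card (Rset t) \<le> n"
proof -
  have "card (Eset \<union> Rset t) = card Eset + card (Rset t)"
    by (rule card_Un_disjoint) (auto simp: Eset_def Rset_def)
  moreover have "card (Eset \<union> Rset t) \<le> card {..<n}"
    by (rule card_mono) (auto simp: Eset_def Rset_def)
  ultimately show ?thesis by simp
qed

lemma E_R_ge: "\<exists>T0. \<forall>t\<ge>T0. n \<le> card Eset + card (Rset t)"
proof -
  define tt where "tt i = (if \<exists>t. frz t i then SOME t. frz t i else 0)" for i
  define T0 where "T0 = (\<Sum>i<n. tt i)"
  have "n \<le> card Eset + card (Rset t)" if t: "T0 \<le> t" for t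
  proof -
    have "{..<n} \<subseteq> Eset \<union> Rset t"
    proof
      fix i assume i: "i \<in> {..<n}"
      show "i \<in> Eset \<union> Rset t"
      proof (cases "\<exists>t. frz t i")
        case True
        then have "frz (tt i) i" using someI_ex[OF True] by (simp add: tt_def)
        moreover have "tt i \<le> T0" unfolding T0_def using i by (intro member_le_sum) auto
        ultimately have "frz t i" using t frz_mono by (meson order_trans)
        then show ?thesis using i by (simp add: Rset_def)
      next
        case False then show ?thesis using i by (simp add: Eset_def)
      qed
    qed
    then have "card {..<n} \<le> card (Eset \<union> Rset t)" by (intro card_mono) (auto simp: Eset_def Rset_def)
    also have "\<dots> \<le> card Eset + card (Rset t)" by (rule card_Un_le)
    finally show ?thesis by simp
  qed
  then show ?thesis by blast
qed

lemma sum_X_frozen: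
  assumes "\<forall>i<n. \<not> frz t i \<longrightarrow> f (X t i) = 0"
  shows "(\<Sum>i<n. f (X t i)) = real (card (Rset t)) * f v0"
proof -
  have "(\<Sum>i<n. f (X t i)) = (\<Sum>i<n. if frz t i then f v0 else 0)"
    using assms by (intro sum.cong) (auto simp: frz_def)
  also have "\<dots> = (\<Sum>i\<in>Rset t. f v0)"
    by (simp add: sum.If_cases Rset_def lessThan_def Collect_conj_eq Int_commute)
  finally show ?thesis by simp
qed

lemma sum_X_ge:
  assumes "\<And>x. 0 \<le> f x"
  shows "real (card (Rset t)) * f v0 \<le> (\<Sum>i<n. f (X t i))"
proof -
  have "real (card (Rset t)) * f v0 = (\<Sum>i<n. if frz t i then f (X t i) else 0)"
    by (simp add: sum.If_cases Rset_def lessThan_def Collect_conj_eq Int_commute frz_def)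
  also have "\<dots> \<le> (\<Sum>i<n. f (X t i))" using assms by (intro sum_mono) auto
  finally show ?thesis .
qed

lemma lap_sum_K:
  fixes c :: real
  assumes "\<And>x. lap f x = (if x = v0 then c else 0)"
  shows "(\<Sum>s\<in>{s. s < t \<and> mv s}. lap f (xs s)) = real (K t) * c"
proof -
  have setEq: "{s. s < t \<and> mv s} \<inter> {s. xs s = v0} = {s. s < t \<and> mv s \<and> xs s = v0}" by auto
  show ?thesis using assms by (simp add: sum.If_cases setEq K_def)
qed

lemma lower_bound:
  assumes tr: "transient adj v0"
    and wmin: "\<forall>x y. adj x y \<longrightarrow> weight adj m v0 x (\<rho>0 x) \<le> weight adj m v0 x y"
  shows "real n * escape_prob adj v0 \<le> real (card Eset)"
proof -
  define h where "h z = green adj v0 z / dg z" for z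
  define G where "G = green adj v0 v0"
  obtain T0 where T0: "\<forall>t\<ge>T0. n \<le> card Eset + card (Rset t)" using E_R_ge by blast
  define t where "t = max T0 n"
  define A where "A = xs ` {s. s < t \<and> mv s}"
  have inv: "(\<Sum>i<n. h (X t i)) + (\<Sum>x\<in>A. wt adj m h x (rho t x) - wt adj m h x (\<rho>0 x))
         = real n * h v0 + (\<Sum>s\<in>{s. s < t \<and> mv s}. lap h (xs s))"
    by (rule invariant) (auto simp: A_def)
  have lp: "lap h x = (if x = v0 then - 1 / dg v0 else 0)" for x
    using green_lap[OF tr, of x] by (simp add: lap_def h_def)
  have L: "(\<Sum>s\<in>{s. s < t \<and> mv s}. lap h (xs s)) = real (K t) * (- 1 / dg v0)"
    by (rule lap_sum_K) (rule lp)
  have W: "0 \<le> (\<Sum>x\<in>A. wt adj m h x (rho t x) - wt adj m h x (\<rho>0 x))"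
  proof (rule sum_nonneg)
    fix x assume "x \<in> A"
    have "adj x (rho t x)" using rc_t[of t x] by (simp add: nbrs_def)
    then have "weight adj m v0 x (\<rho>0 x) \<le> weight adj m v0 x (rho t x)" using wmin by blast
    then show "0 \<le> wt adj m h x (rho t x) - wt adj m h x (\<rho>0 x)"
      by (simp add: weight_wt h_def[abs_def])
  qed
  have hnn: "0 \<le> h z" for z using green_nonneg[OF tr, of z] dpos[of z] by (simp add: h_def)
  have Kt: "real n \<le> real (K t)" using K_ge[of t] by (simp add: t_def)
  have "real (card (Rset t)) * h v0 \<le> real n * h v0 - real (K t) / dg v0"
    using inv L W sum_X_ge[of h t, OF hnn] by simp
  also have "\<dots> \<le> real n * h v0 - real n / dg v0"
    using Kt dpos[of v0] by (simp add: divide_right_mono)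
  finally have RG: "real (card (Rset t)) * G \<le> real n * G - real n"
    using dpos[of v0] by (simp add: h_def G_def field_simps)
  have aG: "escape_prob adj v0 * G = 1" using alpha_green[OF tr] by (simp add: G_def)
  have G1: "G \<ge> 1" using green_ge1[OF tr] by (simp add: G_def)
  have "n \<le> card Eset + card (Rset t)" using T0 by (simp add: t_def)
  then have nER: "real n \<le> real (card Eset) + real (card (Rset t))" by linarith
  have e1: "real n * escape_prob adj v0 * G = real n" using aG by (simp add: mult.assoc)
  have e2: "real n \<le> (real n - real (card (Rset t))) * G" using RG by (simp add: algebra_simps)
  have e3: "(real n - real (card (Rset t))) * G \<le> real (card Eset) * G"
    using nER G1 by (intro mult_right_mono) auto
  have "real n * escape_prob adj v0 * G \<le> real (card Eset) * G" using e1 e2 e3 by linarith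
  then show ?thesis using G1 by simp
qed

lemma upper_bound:
  assumes N: "1 \<le> N"
  shows "real (card Eset) * (\<Sum>k<N. p k v0 v0) \<le> real n * (1 - p N v0 v0) + CN m N * dg v0"
proof -
  define f where "f = hN N"
  define GN where "GN = (\<Sum>k<N. p k v0 v0)"
  have GN1: "1 \<le> GN"
  proof -
    have "(\<Sum>k<1. p k v0 v0) \<le> GN" unfolding GN_def using N by (intro sum_mono2) (auto simp: p_nonneg)
    then show ?thesis by simp
  qed
  obtain T1 where T1: "\<forall>t\<ge>T1. \<forall>i<n. \<not> frz t i \<longrightarrow> X t i \<notin> {x. f x \<noteq> 0}"
    using eventually_out[OF hN_supp_finite[of N]] by (auto simp: f_def)
  define t where "t = T1"
  define A where "A = xs ` {s. s < t \<and> mv s}"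
  have finA: "finite A" by (simp add: A_def)
  have inv: "(\<Sum>i<n. f (X t i)) + (\<Sum>x\<in>A. wt adj m f x (rho t x) - wt adj m f x (\<rho>0 x))
         = real n * f v0 + (\<Sum>s\<in>{s. s < t \<and> mv s}. lap f (xs s))"
    by (rule invariant) (auto simp: A_def)
  have S: "(\<Sum>i<n. f (X t i)) = real (card (Rset t)) * f v0"
    by (rule sum_X_frozen) (use T1 in \<open>auto simp: t_def\<close>)
  have W: "(\<Sum>x\<in>A. wt adj m f x (rho t x) - wt adj m f x (\<rho>0 x)) \<le> CN m N"
  proof -
    have "(\<Sum>x\<in>A. wt adj m f x (rho t x) - wt adj m f x (\<rho>0 x))
          = (\<Sum>x\<in>A \<inter> TN N. wt adj m f x (rho t x) - wt adj m f x (\<rho>0 x))"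
    proof (rule sum.mono_neutral_right)
      show "\<forall>x\<in>A - A \<inter> TN N. wt adj m f x (rho t x) - wt adj m f x (\<rho>0 x) = 0"
      proof
        fix x assume "x \<in> A - A \<inter> TN N"
        then have z: "\<forall>z\<in>nbrs adj x. f z = 0" by (auto simp: TN_def f_def)
        have r0: "\<rho>0 x \<in> nbrs adj x" using rc by (simp add: rotor_config_def nbrs_def)
        show "wt adj m f x (rho t x) - wt adj m f x (\<rho>0 x) = 0"
          using wt_zero[OF rm lfa rc_t z] wt_zero[OF rm lfa r0 z] by simp
      qed
    qed (use finA in auto)
    also have "\<dots> \<le> (\<Sum>x\<in>A \<inter> TN N. 2 * (\<Sum>z\<in>nbrs adj x. \<bar>f z\<bar>))"
    proof (rule sum_mono)
      fix x assume "x \<in> A \<inter> TN N"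
      have r0: "\<rho>0 x \<in> nbrs adj x" using rc by (simp add: rotor_config_def nbrs_def)
      show "wt adj m f x (rho t x) - wt adj m f x (\<rho>0 x) \<le> 2 * (\<Sum>z\<in>nbrs adj x. \<bar>f z\<bar>)"
        using wt_bound[OF rm lfa rc_t[of t x], of f] wt_bound[OF rm lfa r0, of f] by linarith
    qed
    also have "\<dots> \<le> (\<Sum>x\<in>TN N. 2 * (\<Sum>z\<in>nbrs adj x. \<bar>f z\<bar>))"
      by (rule sum_mono2) (auto simp: TN_finite intro!: sum_nonneg)
    finally show ?thesis by (simp add: CN_def f_def)
  qed
  have lp: "lap f x \<ge> (if x = v0 then (p N v0 v0 - 1) / dg v0 else 0)" for x
    using hN_lap[of N x] dpos[of x] p_nonneg[of N v0 x] by (auto simp: lap_def f_def)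
  have L: "(\<Sum>s\<in>{s. s < t \<and> mv s}. lap f (xs s)) \<ge> real (K t) * ((p N v0 v0 - 1) / dg v0)"
  proof -
    have "(\<Sum>s\<in>{s. s < t \<and> mv s}. lap f (xs s))
          \<ge> (\<Sum>s\<in>{s. s < t \<and> mv s}. (\<lambda>x. if x = v0 then (p N v0 v0 - 1) / dg v0 else 0) (xs s))"
      by (rule sum_mono) (rule lp)
    also have "(\<Sum>s\<in>{s. s < t \<and> mv s}. (\<lambda>x. if x = v0 then (p N v0 v0 - 1) / dg v0 else 0) (xs s))
       = real (K t) * ((p N v0 v0 - 1) / dg v0)"
    proof -
      have setEq: "{s. s < t \<and> mv s} \<inter> {s. xs s = v0} = {s. s < t \<and> mv s \<and> xs s = v0}" by auto
      show ?thesis by (simp add: sum.If_cases setEq K_def)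
    qed
    finally show ?thesis .
  qed
  define q where "q = (1 - p N v0 v0) / dg v0"
  have Kq: "real (K t) * q \<le> real n * q"
    using K_le[of t] p_le1[of N v0 v0] dpos[of v0] unfolding q_def by (intro mult_right_mono) auto
  have qq: "(p N v0 v0 - 1) / dg v0 = - q" unfolding q_def by (simp add: diff_divide_distrib)
  have L': "(\<Sum>s\<in>{s. s < t \<and> mv s}. lap f (xs s)) \<ge> - (real (K t) * q)" using L unfolding qq by simp
  have I: "real (card (Rset t)) * f v0 \<ge> real n * f v0 - real n * q - CN m N"
    using inv S W L' Kq by linarith
  have d0: "dg v0 > 0" by (rule dpos)
  have c1: "real (card (Rset t)) * GN = dg v0 * (real (card (Rset t)) * f v0)"
    using d0 by (simp add: f_def hN_def GN_def)
  have c2: "real n * GN = dg v0 * (real n * f v0)"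
    using d0 by (simp add: f_def hN_def GN_def)
  have c3: "real n * (1 - p N v0 v0) = dg v0 * (real n * q)"
    using d0 by (simp add: q_def)
  have "dg v0 * (real n * f v0 - real n * q - CN m N) \<le> dg v0 * (real (card (Rset t)) * f v0)"
    using I d0 by (intro mult_left_mono) auto
  then have R: "real (card (Rset t)) * GN \<ge> real n * GN - real n * (1 - p N v0 v0) - CN m N * dg v0"
    unfolding c1 c2 c3 by (simp add: algebra_simps)
  have "real (card Eset) + real (card (Rset t)) \<le> real n" using E_R_le[of t] by simp
  then have "real (card Eset) \<le> real n - real (card (Rset t))" by linarith
  then have "real (card Eset) * GN \<le> (real n - real (card (Rset t))) * GN"
    using GN1 by (intro mult_right_mono) auto
  then have "real (card Eset) * GN \<le> real n * GN - real (card (Rset t)) * GN"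
    by (simp add: algebra_simps)
  then show ?thesis using R by (simp add: GN_def)
qed

end

theorem theorem1p1:
  fixes adj :: "'v \<Rightarrow> 'v \<Rightarrow> bool" and v0 :: 'v
    and m :: "'v \<Rightarrow> 'v \<Rightarrow> 'v" and \<rho>min :: "'v \<Rightarrow> 'v"
  assumes "simple_graph adj" and "connected_graph adj" and "locally_finite adj"
    and "transient adj v0"
    and "rotor_mechanism adj m"
    and "rotor_config adj \<rho>min"
    and "\<forall>x y. adj x y \<longrightarrow> weight adj m v0 x (\<rho>min x) \<le> weight adj m v0 x y"
  shows "(\<lambda>n. real (escapes m v0 \<rho>min n) / real n) \<longlonglongrightarrow> escape_prob adj v0"
proof -
  note sg = assms(1) and cg = assms(2) and lfin = assms(3) and tr = assms(4)
    and rm = assms(5) and rc = assms(6) and wmin = assms(7)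
  have grI: "gr adj"
  proof
    show "adj x y \<Longrightarrow> adj y x" for x y using sg by (simp add: simple_graph_def)
    show "\<not> adj x x" for x using sg by (simp add: simple_graph_def)
    show "finite (nbrs adj x)" for x using lfin by (simp add: locally_finite_def)
    show "nbrs adj x \<noteq> {}" for x using rc by (auto simp: rotor_config_def nbrs_def)
    show "adj\<^sup>*\<^sup>* x y" for x y using cg by (simp add: connected_graph_def)
  qed
  interpret gr adj v0 by (rule grI)
  have exI: "n > 0 \<Longrightarrow> exper adj m \<rho>min n" for n
    by (intro exper.intro grI exper_axioms.intro rm rc)
  define \<alpha> where "\<alpha> = escape_prob adj v0"
  define u where "u = (\<lambda>k. p k v0 v0)"
  define GN where "GN N = (\<Sum>k<N. u k)" for N
  define e where "e n = real (escapes m v0 \<rho>min n)" for n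
  have su: "summable u" using summable_p[OF tr] by (simp add: u_def)
  have G: "green adj v0 v0 = suminf u" by (simp add: green_def u_def)
  have G1: "suminf u \<ge> 1" using green_ge1[OF tr] G by simp
  have aG: "\<alpha> * suminf u = 1" using alpha_green[OF tr] G by (simp add: \<alpha>_def)
  have lower: "\<alpha> \<le> e n / real n" if "n > 0" for n
  proof -
    have "real n * \<alpha> \<le> e n"
      using exper.lower_bound[OF exI[OF that] tr wmin] exper.escapes_eq[OF exI[OF that]]
      by (simp add: \<alpha>_def e_def)
    then show ?thesis using that by (simp add: field_simps)
  qed
  have GN1: "GN N \<ge> 1" if "N \<ge> 1" for N
  proof -
    have "(\<Sum>k<1. u k) \<le> GN N" unfolding GN_def using that
      by (intro sum_mono2) (auto simp: u_def p_nonneg)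
    then show ?thesis by (simp add: u_def)
  qed
  define C where "C N = CN m N * dg v0 / GN N" for N
  have upper: "e n / real n \<le> (1 - u N) / GN N + C N / real n" if "n > 0" "N \<ge> 1" for n N
  proof -
    have "e n * GN N \<le> real n * (1 - u N) + CN m N * dg v0"
      using exper.upper_bound[OF exI[OF that(1)] that(2)] exper.escapes_eq[OF exI[OF that(1)]]
      by (simp add: e_def GN_def u_def)
    then have "e n \<le> (real n * (1 - u N) + CN m N * dg v0) / GN N"
      using GN1[OF that(2)] by (simp add: pos_le_divide_eq)
    then have "e n / real n \<le> (real n * (1 - u N) + CN m N * dg v0) / GN N / real n"
      using that(1) by (intro divide_right_mono) auto
    also have "\<dots> = (1 - u N) / GN N + C N / real n"
      using that(1) GN1[OF that(2)] by (simp add: C_def field_simps)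
    finally show ?thesis .
  qed
  have lim: "(\<lambda>N. (1 - u N) / GN N) \<longlonglongrightarrow> (1 - 0) / suminf u"
  proof (intro tendsto_divide tendsto_diff tendsto_const)
    show "u \<longlonglongrightarrow> 0" by (rule summable_LIMSEQ_zero[OF su])
    show "GN \<longlonglongrightarrow> suminf u" unfolding GN_def[abs_def] by (rule summable_LIMSEQ[OF su])
    show "suminf u \<noteq> 0" using G1 by simp
  qed
  have lim': "(\<lambda>N. (1 - u N) / GN N) \<longlonglongrightarrow> \<alpha>"
  proof -
    have "1 / suminf u = \<alpha>" using aG G1 by (simp add: field_simps)
    then show ?thesis using lim by simp
  qed
  show ?thesis
    unfolding LIMSEQ_iff
  proof (intro allI impI)
    fix r :: real assume r: "r > 0"
    obtain N1 where N1: "\<forall>N\<ge>N1. norm ((1 - u N) / GN N - \<alpha>) < r / 2"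
      using lim' r unfolding LIMSEQ_iff by (meson half_gt_zero)
    define N where "N = max N1 1"
    have "norm ((1 - u N) / GN N - \<alpha>) < r / 2" using N1 by (simp add: N_def)
    then have "\<bar>(1 - u N) / GN N - \<alpha>\<bar> < r / 2" by (simp only: real_norm_def)
    then have aN: "(1 - u N) / GN N < \<alpha> + r / 2" by linarith
    obtain no :: nat where no: "real no > 2 * \<bar>C N\<bar> / r" using reals_Archimedean2 by blast
    have "norm (real (escapes m v0 \<rho>min n) / real n - \<alpha>) < r" if n: "n \<ge> Suc no" for n
    proof -
      have n0: "n > 0" using n by simp
      have "C N / real n \<le> \<bar>C N\<bar> / real n" using n0 by (simp add: divide_right_mono)
      also have "\<bar>C N\<bar> / real n < r / 2"
      proof -
        have "2 * \<bar>C N\<bar> / r < real n" using no n by simp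
        then have "2 * \<bar>C N\<bar> < real n * r" using r by (simp add: pos_divide_less_eq)
        then show ?thesis using n0 by (simp add: pos_divide_less_eq mult.commute)
      qed
      finally have "C N / real n < r / 2" .
      moreover have "e n / real n \<le> (1 - u N) / GN N + C N / real n"
        using upper[OF n0, of N] by (simp add: N_def)
      ultimately have "e n / real n < \<alpha> + r" using aN by linarith
      moreover have "\<alpha> \<le> e n / real n" by (rule lower[OF n0])
      ultimately show ?thesis by (simp add: e_def)
    qed
    then show "\<exists>no. \<forall>n\<ge>no. norm (real (escapes m v0 \<rho>min n) / real n - escape_prob adj v0) < r"
      unfolding \<alpha>_def by blast
  qed
qed


end
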